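(* Let $\omega_p\in(-\pi,\pi)\setminus\{0\}$ and let $f_c(z)=\frac{\alpha_cz^2+\beta_cz+1}{z^2+\beta_cz+\alpha_c}$ with real $\alpha_c,\beta_c$ such that $f_c$ is stable with a pair of non-real complex-conjugate poles (equivalently $0<\alpha_c<1$ and $\beta_c^2<4\alpha_c$). Then there exist real $\alpha_r,\beta_r$ such that $f_r(z)=\frac{\alpha_rz^2+\beta_rz+1}{z^2+\beta_rz+\alpha_r}$ is stable with two real poles (equivalently $|\alpha_r|<1$, $|\beta_r|<\alpha_r+1$, $\beta_r^2\ge4\alpha_r$), and $$\theta_{f_c}(\omega_p)=\theta_{f_r}(\omega_p)\ (\mathrm{mod}\ 2\pi)\quad\text{and}\quad\theta_{f_c}'(\omega_p)<\theta_{f_r}'(\omega_p).$$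
   Context: Stable means all poles in the open unit disk; such $f_c,f_r$ are all-pass with $|f(e^{j\omega})|=1$ for all $\omega$. $\theta_f(\omega):=\angle f(e^{j\omega})$ is a continuous choice of argument and $\theta_f'(\omega)$ its derivative with respect to $\omega$. *)

theory Defs
  imports "HOL-Analysis.Analysis"
begin

definition allpass2 :: "real \<Rightarrow> real \<Rightarrow> complex \<Rightarrow> complex" where
  "allpass2 a b z = (of_real a * z^2 + of_real b * z + 1) / (z^2 + of_real b * z + of_real a)"

definition poles2 :: "real \<Rightarrow> real \<Rightarrow> complex set" where
  "poles2 a b = {z. z^2 + of_real b * z + of_real a = 0}"

definition stable2 :: "real \<Rightarrow> real \<Rightarrow> bool" where
  "stable2 a b \<longleftrightarrow> (\<forall>z\<in>poles2 a b. norm z < 1)"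

definition nonreal_poles2 :: "real \<Rightarrow> real \<Rightarrow> bool" where
  "nonreal_poles2 a b \<longleftrightarrow> (\<forall>z\<in>poles2 a b. Im z \<noteq> 0)"

definition real_poles2 :: "real \<Rightarrow> real \<Rightarrow> bool" where
  "real_poles2 a b \<longleftrightarrow> (\<forall>z\<in>poles2 a b. Im z = 0)"

definition cont_arg :: "(complex \<Rightarrow> complex) \<Rightarrow> (real \<Rightarrow> real) \<Rightarrow> bool" where
  "cont_arg f \<theta> \<longleftrightarrow> continuous_on UNIV \<theta> \<and>
     (\<forall>\<omega>. f (cis \<omega>) = of_real (norm (f (cis \<omega>))) * cis (\<theta> \<omega>))"

end

theory Submission imports Defs begin
lemma lift_deriv:
  fixes g :: "real \<Rightarrow> complex" and \<theta> :: "real \<Rightarrow> real"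
  assumes cont: "continuous_on UNIV \<theta>"
    and eq: "\<And>x. g x = of_real (norm (g x)) * cis (\<theta> x)"
    and nz: "\<And>x. g x \<noteq> 0"
    and D: "(g has_vector_derivative g') (at w)"
  shows "(\<theta> has_real_derivative Im (g' / g w)) (at w)"
proof -
  define S where "S = \<theta> -` {\<theta> w - pi <..< \<theta> w + pi}"
  have oS: "open S" unfolding S_def
    using continuous_on_open_vimage[of UNIV \<theta>] cont by auto
  have wS: "w \<in> S" unfolding S_def by simp
  have key: "\<theta> w + Im (Ln (g x / g w)) = \<theta> x" if "x \<in> S" for x
  proof -
    have r: "norm (g x) / norm (g w) > 0" using nz by simp
    have "g x / g w = rcis (norm (g x) / norm (g w)) (\<theta> x - \<theta> w)"
      apply (subst eq[of x], subst eq[of w])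
      using nz[of w] by (simp add: rcis_def cis_divide[symmetric] field_simps)
    then have "Arg (g x / g w) = \<theta> x - \<theta> w"
      using that r by (intro Arg_unique') (auto simp: S_def)
    then show ?thesis using nz by (simp add: Arg_eq_Im_Ln)
  qed
  have D1: "((\<lambda>x. g x / g w) has_vector_derivative (g' / g w)) (at w)"
    using D nz[of w] by (auto intro!: derivative_eq_intros simp: divide_inverse)
  have L: "(Ln has_field_derivative inverse 1) (at ((\<lambda>x. g x / g w) w))"
    using nz[of w] has_field_derivative_Ln[of 1] by (simp add: complex_nonpos_Reals_iff)
  have D2: "((\<lambda>x. Ln (g x / g w)) has_vector_derivative (g' / g w * inverse 1)) (at w)"
    using field_vector_diff_chain_at[OF D1 L] by (simp add: o_def)
  have D3: "((\<lambda>x. \<theta> w + Im (Ln (g x / g w))) has_real_derivative Im (g' / g w)) (at w)"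
    using DERIV_add[OF DERIV_const[of "\<theta> w"] has_field_derivative_Im[OF D2]] by simp
  show ?thesis
    by (rule has_field_derivative_transform_within_open[OF D3 oS wS key])
qed

lemma fdiv: fixes N A B :: complex
  assumes "A \<noteq> 0" "B \<noteq> 0" shows "(N / A^2) / (B / A) = N / (A*B)"
  using assms by (simp add: field_simps power2_eq_square)

lemma alg:
  fixes X Y Xd Yd :: real
  assumes "X\<^sup>2 + Y\<^sup>2 \<noteq> 0"
  shows "Im ((((of_real Xd - \<i> * of_real Yd) * (of_real X + \<i> * of_real Y)
          - (of_real X - \<i> * of_real Y) * (of_real Xd + \<i> * of_real Yd)) / (of_real X + \<i> * of_real Y)^2)
          / ((of_real X - \<i> * of_real Y) / (of_real X + \<i> * of_real Y)))
        = 2 * (Xd * Y - X * Yd) / (X\<^sup>2 + Y\<^sup>2)"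
proof -
  have n1: "(of_real X + \<i> * of_real Y :: complex) \<noteq> 0"
    using assms by (auto simp: complex_eq_iff)
  have n2: "(of_real X - \<i> * of_real Y :: complex) \<noteq> 0"
    using assms by (auto simp: complex_eq_iff)
  have p: "(of_real X + \<i> * of_real Y) * (of_real X - \<i> * of_real Y) = (of_real (X\<^sup>2 + Y\<^sup>2) :: complex)"
    by (simp add: complex_eq_iff power2_eq_square)
  have num: "((of_real Xd - \<i> * of_real Yd) * (of_real X + \<i> * of_real Y)
          - (of_real X - \<i> * of_real Y) * (of_real Xd + \<i> * of_real Yd)) = \<i> * of_real (2 * (Xd * Y - X * Yd))"
    by (simp add: complex_eq_iff algebra_simps)
  have "(((of_real Xd - \<i> * of_real Yd) * (of_real X + \<i> * of_real Y)
          - (of_real X - \<i> * of_real Y) * (of_real Xd + \<i> * of_real Yd)) / (of_real X + \<i> * of_real Y)^2)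
          / ((of_real X - \<i> * of_real Y) / (of_real X + \<i> * of_real Y))
       = \<i> * of_real (2 * (Xd * Y - X * Yd)) / ((of_real X + \<i> * of_real Y) * (of_real X - \<i> * of_real Y))"
    unfolding num using n1 n2 by (rule fdiv)
  also have "\<dots> = \<i> * of_real (2 * (Xd * Y - X * Yd) / (X\<^sup>2 + Y\<^sup>2))"
    unfolding p by simp
  finally show ?thesis by simp
qed

lemma circ:
  fixes a b w :: real
  defines "E \<equiv> Complex ((1+a) * cos w + b) ((1-a) * sin w)"
  assumes st: "stable2 a b"
  shows "E \<noteq> 0" "allpass2 a b (cis w) = cnj E / E"
proof -
  let ?z = "cis w"
  have s2: "sin w * sin w = 1 - cos w * cos w" using sin_squared_eq[of w] by (simp add: power2_eq_square)
  have den: "?z^2 + of_real b * ?z + of_real a = ?z * E"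
    unfolding E_def by (simp add: complex_eq_iff power2_eq_square cis.sel algebra_simps s2)
  have num: "of_real a * ?z^2 + of_real b * ?z + 1 = ?z * cnj E"
    unfolding E_def by (simp add: complex_eq_iff power2_eq_square cis.sel algebra_simps s2)
  show nz: "E \<noteq> 0"
  proof
    assume "E = 0"
    then have "?z \<in> poles2 a b" using den by (simp add: poles2_def)
    then show False using st by (auto simp: stable2_def)
  qed
  show "allpass2 a b (cis w) = cnj E / E"
    unfolding allpass2_def num den using nz by simp
qed


lemma allpass_deriv:
  fixes a b w :: real and \<theta> :: "real \<Rightarrow> real"
  defines "X \<equiv> (1+a) * cos w + b" and "Y \<equiv> (1-a) * sin w"
    and "Xd \<equiv> - (1+a) * sin w" and "Yd \<equiv> (1-a) * cos w"
  assumes st: "stable2 a b" and ca: "cont_arg (allpass2 a b) \<theta>"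
  shows "(\<theta> has_real_derivative 2 * (Xd * Y - X * Yd) / (X\<^sup>2 + Y\<^sup>2)) (at w)"
    "cis (\<theta> w) = cnj (Complex X Y) / Complex X Y"
proof -
  define Ec where "Ec t = of_real(1+a) * cos t + of_real b + \<i> * of_real(1-a) * sin t" for t :: complex
  define Et where "Et t = of_real(1+a) * cos t + of_real b - \<i> * of_real(1-a) * sin t" for t :: complex
  define G where "G t = Et t / Ec t" for t
  define g where "g x = allpass2 a b (cis x)" for x
  have gE: "g x = cnj (Complex ((1+a) * cos x + b) ((1-a) * sin x)) / Complex ((1+a) * cos x + b) ((1-a) * sin x)" for x
    unfolding g_def by (rule circ(2)[OF st])
  have Enz: "Complex ((1+a) * cos x + b) ((1-a) * sin x) \<noteq> 0" for x
    by (rule circ(1)[OF st])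
  have gG: "g x = G (of_real x)" for x
  proof -
    have 1: "Ec (of_real x) = Complex ((1+a) * cos x + b) ((1-a) * sin x)"
      unfolding Ec_def by (simp add: cos_of_real sin_of_real complex_eq_iff)
    have 2: "Et (of_real x) = cnj (Complex ((1+a) * cos x + b) ((1-a) * sin x))"
      unfolding Et_def by (simp add: cos_of_real sin_of_real complex_eq_iff)
    show ?thesis unfolding gE G_def 1 2 ..
  qed
  have gnz: "g x \<noteq> 0" for x unfolding gE using Enz[of x] by (simp del: Complex_eq_0)
  have gn1: "norm (g x) = 1" for x unfolding gE using Enz[of x] by (simp add: norm_divide)
  have ca': "g x = of_real (norm (g x)) * cis (\<theta> x)" for x
    using ca unfolding cont_arg_def g_def by auto
  have cont: "continuous_on UNIV \<theta>" using ca unfolding cont_arg_def by auto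
  have Ecw: "Ec (of_real w) = of_real X + \<i> * of_real Y"
    unfolding Ec_def X_def Y_def by (simp add: cos_of_real sin_of_real)
  have Etw: "Et (of_real w) = of_real X - \<i> * of_real Y"
    unfolding Et_def X_def Y_def by (simp add: cos_of_real sin_of_real)
  have Ecnz: "Ec (of_real w) \<noteq> 0" using Enz[of w] unfolding Ecw X_def Y_def by (simp add: complex_eq_iff)
  have dEc: "(Ec has_field_derivative (of_real Xd + \<i> * of_real Yd)) (at (of_real w))"
    unfolding Ec_def Xd_def Yd_def
    by (auto intro!: derivative_eq_intros simp: cos_of_real sin_of_real algebra_simps)
  have dEt: "(Et has_field_derivative (of_real Xd - \<i> * of_real Yd)) (at (of_real w))"
    unfolding Et_def Xd_def Yd_def
    by (auto intro!: derivative_eq_intros simp: cos_of_real sin_of_real algebra_simps)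
  have dG: "(G has_field_derivative
      (((of_real Xd - \<i> * of_real Yd) * (of_real X + \<i> * of_real Y)
          - (of_real X - \<i> * of_real Y) * (of_real Xd + \<i> * of_real Yd)) / (of_real X + \<i> * of_real Y)^2))
      (at (of_real w))"
    unfolding G_def
    using DERIV_divide[OF dEt dEc Ecnz] unfolding Ecw Etw by (simp add: power2_eq_square)
  have dg: "(g has_vector_derivative
      (((of_real Xd - \<i> * of_real Yd) * (of_real X + \<i> * of_real Y)
          - (of_real X - \<i> * of_real Y) * (of_real Xd + \<i> * of_real Yd)) / (of_real X + \<i> * of_real Y)^2))
      (at w)"
    unfolding gG[abs_def] by (rule has_vector_derivative_real_field[OF dG])
  have gw: "g w = (of_real X - \<i> * of_real Y) / (of_real X + \<i> * of_real Y)"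
    unfolding gG G_def Ecw Etw ..
  have N: "X\<^sup>2 + Y\<^sup>2 \<noteq> 0" using Enz[of w] unfolding X_def Y_def by (auto simp: complex_eq_iff)
  show "(\<theta> has_real_derivative 2 * (Xd * Y - X * Yd) / (X\<^sup>2 + Y\<^sup>2)) (at w)"
    using lift_deriv[OF cont ca' gnz dg] unfolding gw alg[OF N] .
  show "cis (\<theta> w) = cnj (Complex X Y) / Complex X Y"
    using ca'[of w] gn1[of w] gE[of w] unfolding X_def Y_def by simp
qed

theorem lemma4:
  fixes \<omega>p \<alpha>c \<beta>c :: real
  assumes "-pi < \<omega>p" "\<omega>p < pi" "\<omega>p \<noteq> 0"
    and "stable2 \<alpha>c \<beta>c" "nonreal_poles2 \<alpha>c \<beta>c"
  shows "\<exists>\<alpha>r \<beta>r :: real. stable2 \<alpha>r \<beta>r \<and> real_poles2 \<alpha>r \<beta>r \<and>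
     (\<forall>\<theta>c \<theta>r. cont_arg (allpass2 \<alpha>c \<beta>c) \<theta>c \<and> cont_arg (allpass2 \<alpha>r \<beta>r) \<theta>r \<longrightarrow>
        (\<exists>k::int. \<theta>c \<omega>p = \<theta>r \<omega>p + 2 * pi * of_int k) \<and>
        \<theta>c differentiable (at \<omega>p) \<and> \<theta>r differentiable (at \<omega>p) \<and>
        deriv \<theta>c \<omega>p < deriv \<theta>r \<omega>p)"
proof -
  note stc = assms(4)
  have disc: "\<beta>c\<^sup>2 < 4 * \<alpha>c"
  proof (rule ccontr)
    assume "\<not> ?thesis"
    then have ge: "\<beta>c\<^sup>2 - 4 * \<alpha>c \<ge> 0" by simp
    define r where "r = (- \<beta>c + sqrt (\<beta>c\<^sup>2 - 4 * \<alpha>c)) / 2"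
    have "r\<^sup>2 + \<beta>c * r + \<alpha>c = 0"
      unfolding r_def using real_sqrt_pow2[OF ge] by (simp add: power2_eq_square field_simps)
    then have "(of_real r :: complex)\<^sup>2 + of_real \<beta>c * of_real r + of_real \<alpha>c = 0"
      by (metis of_real_0 of_real_add of_real_mult of_real_power)
    then have "of_real r \<in> poles2 \<alpha>c \<beta>c" by (simp add: poles2_def)
    then show False using assms(5) by (auto simp: nonreal_poles2_def)
  qed
  have ac1: "\<alpha>c < 1"
  proof -
    have ge: "4 * \<alpha>c - \<beta>c\<^sup>2 \<ge> 0" using disc by simp
    define z where "z = Complex (- \<beta>c / 2) (sqrt (4 * \<alpha>c - \<beta>c\<^sup>2) / 2)"
    have "z\<^sup>2 + of_real \<beta>c * z + of_real \<alpha>c = 0"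
      unfolding z_def using real_sqrt_pow2[OF ge]
      by (simp add: complex_eq_iff power2_eq_square field_simps)
    then have "z \<in> poles2 \<alpha>c \<beta>c" by (simp add: poles2_def)
    then have n: "norm z < 1" using stc by (auto simp: stable2_def)
    have "(norm z)\<^sup>2 = \<alpha>c"
      unfolding z_def cmod_power2 using real_sqrt_pow2[OF ge] by (simp add: power2_eq_square field_simps)
    moreover have "(norm z)\<^sup>2 < 1" using n by (simp add: power_less_one_iff abs_square_less_1)
    ultimately show ?thesis by simp
  qed
  define c where "c = cos \<omega>p"
  define s where "s = sin \<omega>p"
  have s0: "s \<noteq> 0" unfolding s_def using sin_eq_0_pi assms(1-3) by blast
  have sc: "s\<^sup>2 + c\<^sup>2 = 1" unfolding s_def c_def by simp
  have s2pos: "s\<^sup>2 > 0" using s0 by simp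
  define K where "K = 2 * c + \<beta>c"
  define m where "m = 1 - \<alpha>c - c * K"
  define R where "R = sqrt (m\<^sup>2 + K\<^sup>2 * s\<^sup>2)"
  have R0: "R \<ge> 0" unfolding R_def by simp
  have R2: "R\<^sup>2 = m\<^sup>2 + K\<^sup>2 * s\<^sup>2" unfolding R_def by simp
  have mR: "m + R > 0"
  proof (rule ccontr)
    assume "\<not> ?thesis"
    then have "R \<le> - m" by simp
    then have "R\<^sup>2 \<le> m\<^sup>2" using R0 by (metis abs_le_square_iff abs_of_nonneg abs_minus_cancel abs_ge_self order_trans)
    then have "K\<^sup>2 * s\<^sup>2 \<le> 0" using R2 by simp
    then have "K = 0" using s2pos by (simp add: mult_le_0_iff)
    then have "m = 1 - \<alpha>c" unfolding m_def by simp
    then show False using \<open>R \<le> - m\<close> R0 ac1 by simp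
  qed
  define lam where "lam = 2 * s\<^sup>2 / (m + R)"
  have lam_pos: "lam > 0" unfolding lam_def using mR s2pos by simp
  have Kb: "K\<^sup>2 < 4 * s\<^sup>2 - 4 * m"
  proof -
    have "(K - 2 * c)\<^sup>2 < 4 * \<alpha>c" using disc unfolding K_def by simp
    then show ?thesis unfolding m_def using sc by (simp add: power2_eq_square algebra_simps)
  qed
  have "m < s\<^sup>2" using Kb by (smt (verit) zero_le_power2)
  then have pos: "2 * s\<^sup>2 - m > 0" using s2pos by linarith
  have "R\<^sup>2 < (2 * s\<^sup>2 - m)\<^sup>2"
  proof -
    have "K\<^sup>2 * s\<^sup>2 < (4 * s\<^sup>2 - 4 * m) * s\<^sup>2" using Kb s2pos by (rule mult_strict_right_mono)
    then show ?thesis unfolding R2 by (simp add: power2_eq_square algebra_simps)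
  qed
  then have "R < 2 * s\<^sup>2 - m" using pos R0 by (smt (verit) power_mono)
  then have lam1: "lam > 1" unfolding lam_def using mR by simp
  have lamK: "lam * K\<^sup>2 = 2 * (R - m)"
  proof -
    have "lam * (m + R) = 2 * s\<^sup>2" unfolding lam_def using mR by simp
    then have "lam * K\<^sup>2 * (m + R) = 2 * (R - m) * (m + R)"
      using R2 by (simp add: algebra_simps power2_eq_square)
    then show ?thesis using mR by simp
  qed
  define ar where "ar = 1 - lam * (1 - \<alpha>c)"
  define br where "br = lam * K - 2 * c"
  have dbl: "br\<^sup>2 = 4 * ar"
  proof -
    have "br\<^sup>2 - 4 * ar = lam * (lam * K\<^sup>2 + 4 * m) - 4 * s\<^sup>2"
      unfolding br_def ar_def m_def using sc by (simp add: power2_eq_square algebra_simps)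
    also have "\<dots> = lam * (2 * (m + R)) - 4 * s\<^sup>2"
    proof -
      have e: "lam * K\<^sup>2 + 4 * m = 2 * (m + R)" using lamK by simp
      show ?thesis by (simp only: e)
    qed
    also have "\<dots> = 2 * lam * (m + R) - 4 * s\<^sup>2" by simp
    also have "\<dots> = 0" unfolding lam_def using mR by simp
    finally show ?thesis by simp
  qed
  have ar1: "ar < 1" unfolding ar_def using lam_pos ac1 by simp
  have poles_r: "z = - of_real br / 2" if "z \<in> poles2 ar br" for z
  proof -
    have "z\<^sup>2 + of_real br * z + of_real ar = 0" using that by (simp add: poles2_def)
    moreover have "z\<^sup>2 + of_real br * z + of_real ar = (z + of_real br / 2)\<^sup>2"
      using dbl by (simp add: power2_eq_square algebra_simps of_real_mult[symmetric]
          del: of_real_mult) (metis of_real_mult of_real_numeral)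
    ultimately show ?thesis by (simp add: eq_neg_iff_add_eq_0)
  qed
  have st_r: "stable2 ar br"
    unfolding stable2_def
  proof
    fix z assume "z \<in> poles2 ar br"
    then have z: "z = - of_real br / 2" by (rule poles_r)
    have "br\<^sup>2 < 4" using dbl ar1 by simp
    then have "\<bar>br\<bar>\<^sup>2 < 2\<^sup>2" by simp
    then have "\<bar>br\<bar> < 2" by (rule power_less_imp_less_base) simp
    then show "norm z < 1" unfolding z by (simp add: norm_divide)
  qed
  have rp_r: "real_poles2 ar br"
    unfolding real_poles2_def
  proof
    fix z assume "z \<in> poles2 ar br"
    then have "z = - of_real br / 2" by (rule poles_r)
    then show "Im z = 0" by simp
  qed
  show ?thesis
  proof (rule exI[of _ ar], rule exI[of _ br], intro conjI allI impI)
    show "stable2 ar br" by (rule st_r)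
    show "real_poles2 ar br" by (rule rp_r)
    fix \<theta>c \<theta>r
    assume h: "cont_arg (allpass2 \<alpha>c \<beta>c) \<theta>c \<and> cont_arg (allpass2 ar br) \<theta>r"
    note Dc = allpass_deriv[OF stc conjunct1[OF h], of \<omega>p]
    note Dr = allpass_deriv[OF st_r conjunct2[OF h], of \<omega>p]
    define Xc where "Xc = (1 + \<alpha>c) * c + \<beta>c"
    define Yc where "Yc = (1 - \<alpha>c) * s"
    have Xr: "(1 + ar) * c + br = lam * Xc" unfolding ar_def br_def Xc_def K_def by (simp add: algebra_simps)
    have Yr: "(1 - ar) * s = lam * Yc" unfolding ar_def Yc_def by (simp add: algebra_simps)
    have cis_eq: "cis (\<theta>c \<omega>p) = cis (\<theta>r \<omega>p)"
    proof -
      have "Complex ((1 + ar) * c + br) ((1 - ar) * s) = of_real lam * Complex Xc Yc"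
        unfolding Xr Yr by (simp add: complex_eq_iff)
      then show ?thesis using Dc(2) Dr(2) lam_pos unfolding Xc_def Yc_def c_def s_def
        by simp
    qed
    then obtain n :: int where "\<theta>c \<omega>p = \<theta>r \<omega>p + 2 * pi * of_int n"
      using sin_cos_eq_iff[of "\<theta>c \<omega>p" "\<theta>r \<omega>p"] unfolding cis.ctr[symmetric] complex_eq_iff
      by (auto simp: cis.sel)
    then show "\<exists>k::int. \<theta>c \<omega>p = \<theta>r \<omega>p + 2 * pi * of_int k" by blast
    show "\<theta>c differentiable (at \<omega>p)" using Dc(1) real_differentiable_def by blast
    show "\<theta>r differentiable (at \<omega>p)" using Dr(1) real_differentiable_def by blast
    show "deriv \<theta>c \<omega>p < deriv \<theta>r \<omega>p"
    proof -
      define N where "N = Xc\<^sup>2 + Yc\<^sup>2"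
      have Npos: "N > 0" unfolding N_def Yc_def using ac1 s0 by (simp add: add_nonneg_pos)
      define Q where "Q = (- (1 + \<alpha>c) * s) * Yc - Xc * ((1 - \<alpha>c) * c)"
      have dc: "deriv \<theta>c \<omega>p = 2 * Q / N"
        using DERIV_imp_deriv[OF Dc(1)] unfolding Q_def N_def Xc_def Yc_def c_def s_def .
      have "deriv \<theta>r \<omega>p = 2 * ((- (1 + ar) * s) * (lam * Yc) - (lam * Xc) * ((1 - ar) * c))
             / ((lam * Xc)\<^sup>2 + (lam * Yc)\<^sup>2)"
        using DERIV_imp_deriv[OF Dr(1)] unfolding c_def[symmetric] s_def[symmetric] Xr Yr .
      also have "\<dots> = 2 * (lam\<^sup>2 * Q + 2 * lam * (lam - 1) * (s * Yc)) / (lam\<^sup>2 * N)"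
      proof -
        have den: "(lam * Xc)\<^sup>2 + (lam * Yc)\<^sup>2 = lam\<^sup>2 * N"
          unfolding N_def by (simp add: power2_eq_square algebra_simps)
        have num: "(- (1 + ar) * s) * (lam * Yc) - (lam * Xc) * ((1 - ar) * c)
             = lam\<^sup>2 * Q + 2 * lam * (lam - 1) * (s * Yc)"
          unfolding Q_def ar_def by (simp add: power2_eq_square algebra_simps)
        show ?thesis unfolding den num ..
      qed
      also have "\<dots> = 2 * Q / N + 4 * (lam - 1) * (s * Yc) / (lam * N)"
        using lam_pos Npos by (simp add: field_simps power2_eq_square)
      finally have dr: "deriv \<theta>r \<omega>p = 2 * Q / N + 4 * (lam - 1) * (s * Yc) / (lam * N)" .
      have "s * Yc = (1 - \<alpha>c) * s\<^sup>2" unfolding Yc_def by (simp add: power2_eq_square)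
      then have "s * Yc > 0" using ac1 s2pos by simp
      then have "4 * (lam - 1) * (s * Yc) / (lam * N) > 0" using lam1 lam_pos Npos by simp
      then show ?thesis unfolding dc dr by simp
    qed
  qed
qed

end
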